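(* Let $G$ be a finite group and $U,V\leq G\times G$ with $\Delta(G)\leq U$ and $\Delta(G)\leq V$. Then $$\frac{k_1((U\ast V)')}{k_1(U)\cap k_1((U\ast V)')}\cong\frac{k_1(V')}{k_2(U)\cap k_1(V')}$$ and $$\frac{k_2((U\ast V)')}{k_2(V)\cap k_2((U\ast V)')}\cong\frac{k_2(U')}{k_1(V)\cap k_2(U')}.$$
   Context: $\Delta(G)=\{(g,g):g\in G\}$. For $W\leq G\times G$: $p_1(W)=\{g:\exists h,(g,h)\in W\}$, $p_2(W)=\{h:\exists g,(g,h)\in W\}$, $k_1(W)=\{g:(g,1)\in W\}$, $k_2(W)=\{h:(1,h)\in W\}$; $W'$ is the commutator subgroup of $W$. The $\ast$-product is $U\ast V=\{(u,v)\in p_1(U)\times p_2(V):\exists x\in p_2(U)\cap p_1(V),\ (u,x)\in U,\ (x,v)\in V\}$. *)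

theory Defs
  imports "HOL-Algebra.Algebra"
begin

definition diag :: "('a, 'b) monoid_scheme \<Rightarrow> ('a \<times> 'a) set" where
  "diag G = {(g, g) | g. g \<in> carrier G}"

definition p1 :: "('a \<times> 'c) set \<Rightarrow> 'a set" where
  "p1 W = {g. \<exists>h. (g, h) \<in> W}"

definition p2 :: "('a \<times> 'c) set \<Rightarrow> 'c set" where
  "p2 W = {h. \<exists>g. (g, h) \<in> W}"

definition k1 :: "('a, 'b) monoid_scheme \<Rightarrow> ('a \<times> 'a) set \<Rightarrow> 'a set" where
  "k1 G W = {g. (g, \<one>\<^bsub>G\<^esub>) \<in> W}"

definition k2 :: "('a, 'b) monoid_scheme \<Rightarrow> ('a \<times> 'a) set \<Rightarrow> 'a set" where
  "k2 G W = {h. (\<one>\<^bsub>G\<^esub>, h) \<in> W}"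

definition star :: "('a \<times> 'a) set \<Rightarrow> ('a \<times> 'a) set \<Rightarrow> ('a \<times> 'a) set" where
  "star U V = {(u, v). u \<in> p1 U \<and> v \<in> p2 V \<and>
      (\<exists>x \<in> p2 U \<inter> p1 V. (u, x) \<in> U \<and> (x, v) \<in> V)}"

definition comm :: "('a, 'b) monoid_scheme \<Rightarrow> ('a \<times> 'a) set \<Rightarrow> ('a \<times> 'a) set" where
  "comm G W = derived (G \<times>\<times> G) W"

end

theory Submission
  imports Defs
begin


lemma k1_subgroup:
  fixes G (structure)
  assumes G: "group G" and K: "subgroup K (G \<times>\<times> G)"
  shows "subgroup (k1 G K) G"
proof -
  interpret group G by fact
  interpret GG: group "G \<times>\<times> G" using DirProd_group[OF G G] .
  show ?thesis
  proof (rule subgroupI)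
    show "k1 G K \<subseteq> carrier G" using subgroup.subset[OF K] by (auto simp: k1_def)
    show "k1 G K \<noteq> {}" using subgroup.one_closed[OF K] by (auto simp: k1_def)
  next
    fix a assume "a \<in> k1 G K"
    hence a: "(a, \<one>) \<in> K" by (simp add: k1_def)
    hence ac: "a \<in> carrier G" using subgroup.subset[OF K] by auto
    have "inv\<^bsub>G \<times>\<times> G\<^esub> (a, \<one>) \<in> K" using subgroup.m_inv_closed[OF K a] .
    thus "inv a \<in> k1 G K" using ac by (simp add: k1_def G)
  next
    fix a b assume "a \<in> k1 G K" "b \<in> k1 G K"
    hence "(a, \<one>) \<in> K" "(b, \<one>) \<in> K" by (simp_all add: k1_def)
    hence "(a, \<one>) \<otimes>\<^bsub>G \<times>\<times> G\<^esub> (b, \<one>) \<in> K" using subgroup.m_closed[OF K] by blast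
    thus "a \<otimes> b \<in> k1 G K" by (simp add: k1_def)
  qed
qed

lemma memU:
  fixes G (structure)
  assumes G: "group G" and U: "subgroup U (G \<times>\<times> G)" and D: "diag G \<subseteq> U"
  shows "(x, y) \<in> U \<longleftrightarrow> x \<in> carrier G \<and> y \<in> carrier G \<and> x \<otimes>\<^bsub>G\<^esub> inv\<^bsub>G\<^esub> y \<in> k1 G U"
proof -
  interpret group G by fact
  have dg: "g \<in> carrier G \<Longrightarrow> (g, g) \<in> U" for g using D by (auto simp: diag_def)
  show ?thesis
  proof
    assume xy: "(x, y) \<in> U"
    hence c: "x \<in> carrier G" "y \<in> carrier G" using subgroup.subset[OF U] by auto
    have iy: "inv y \<in> carrier G" using c by simp
    have "(x, y) \<otimes>\<^bsub>G \<times>\<times> G\<^esub> (inv y, inv y) \<in> U"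
      using subgroup.m_closed[OF U xy dg[OF iy]] .
    thus "x \<in> carrier G \<and> y \<in> carrier G \<and> x \<otimes> inv y \<in> k1 G U" using c by (simp add: k1_def)
  next
    assume h: "x \<in> carrier G \<and> y \<in> carrier G \<and> x \<otimes> inv y \<in> k1 G U"
    hence a: "(x \<otimes> inv y, \<one>) \<in> U" by (simp add: k1_def)
    have "(x \<otimes> inv y, \<one>) \<otimes>\<^bsub>G \<times>\<times> G\<^esub> (y, y) \<in> U"
      using subgroup.m_closed[OF U a dg] h by simp
    thus "(x, y) \<in> U" using h by (simp add: m_assoc)
  qed
qed

lemma k1_normal:
  fixes G (structure)
  assumes G: "group G" and U: "subgroup U (G \<times>\<times> G)" and D: "diag G \<subseteq> U"
  shows "k1 G U \<lhd> G"
proof -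
  interpret group G by fact
  have dg: "g \<in> carrier G \<Longrightarrow> (g, g) \<in> U" for g using D by (auto simp: diag_def)
  have S: "subgroup (k1 G U) G" by (rule k1_subgroup[OF G U])
  show ?thesis unfolding normal_inv_iff
  proof (intro conjI S ballI)
    fix x h assume x: "x \<in> carrier G" and h: "h \<in> k1 G U"
    hence hc: "h \<in> carrier G" using subgroup.subset[OF S] by auto
    have ix: "inv x \<in> carrier G" using x by simp
    have hU: "(h, \<one>) \<in> U" using h by (simp add: k1_def)
    have "(x, x) \<otimes>\<^bsub>G \<times>\<times> G\<^esub> (h, \<one>) \<otimes>\<^bsub>G \<times>\<times> G\<^esub> (inv x, inv x) \<in> U"
      using subgroup.m_closed[OF U subgroup.m_closed[OF U dg[OF x] hU] dg[OF ix]] .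
    thus "x \<otimes> h \<otimes> inv x \<in> k1 G U" using x hc by (simp add: k1_def)
  qed
qed

lemma k2_eq_k1:
  fixes G (structure)
  assumes G: "group G" and U: "subgroup U (G \<times>\<times> G)" and D: "diag G \<subseteq> U"
  shows "k2 G U = k1 G U"
proof -
  interpret group G by fact
  have S: "subgroup (k1 G U) G" by (rule k1_subgroup[OF G U])
  show ?thesis
  unfolding set_eq_iff proof (intro allI iffI)
    fix h assume "h \<in> k2 G U"
    hence "(\<one>, h) \<in> U" by (simp add: k2_def)
    hence "h \<in> carrier G \<and> \<one> \<otimes> inv h \<in> k1 G U" using memU[OF G U D, of \<one> h] by blast
    hence "h \<in> carrier G" "inv h \<in> k1 G U" by (metis l_one inv_closed)+
    thus "h \<in> k1 G U" using subgroup.m_inv_closed[OF S] by fastforce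
  next
    fix h assume h: "h \<in> k1 G U"
    hence "h \<in> carrier G" "inv h \<in> k1 G U" using subgroup.m_inv_closed[OF S] subgroup.subset[OF S] by auto
    thus "h \<in> k2 G U" by (simp add: k2_def memU[OF G U D])
  qed
qed



lemma memU_coset:
  fixes G (structure)
  assumes G: "group G" and U: "subgroup U (G \<times>\<times> G)" and D: "diag G \<subseteq> U"
    and ux: "(u, x) \<in> U"
  shows "k1 G U #> u = k1 G U #> x"
proof -
  interpret group G by fact
  have S: "subgroup (k1 G U) G" by (rule k1_subgroup[OF G U])
  have h: "u \<in> carrier G" "x \<in> carrier G" "u \<otimes> inv x \<in> k1 G U" using ux memU[OF G U D] by auto
  have "u = (u \<otimes> inv x) \<otimes> x" using h by (simp add: m_assoc)
  hence "u \<in> k1 G U #> x" using rcosI[OF h(3) subgroup.subset[OF S] h(2)] by simp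
  thus ?thesis using repr_independence[OF _ h(2) S] by simp
qed

lemma star_carrier:
  assumes "U \<subseteq> carrier (G \<times>\<times> G)" "V \<subseteq> carrier (G \<times>\<times> G)"
  shows "star U V \<subseteq> carrier (G \<times>\<times> G)"
  using assms by (auto simp: star_def p1_def p2_def)

lemma V_sub_star:
  assumes "diag G \<subseteq> U" "V \<subseteq> carrier (G \<times>\<times> G)"
  shows "V \<subseteq> star U V"
proof
  fix z assume z: "z \<in> V"
  obtain a b where ab: "z = (a, b)" by (cases z)
  have "a \<in> carrier G" using z ab assms(2) by auto
  hence "(a, a) \<in> U" using assms(1) by (auto simp: diag_def)
  thus "z \<in> star U V" using z ab by (auto simp: star_def p1_def p2_def)
qed

lemma comm_rcos:
  fixes G (structure)
  assumes N: "N \<lhd> G" and c: "a \<in> carrier G" "b \<in> carrier G" "a' \<in> carrier G" "b' \<in> carrier G"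
    and e: "N #> a = N #> a'" "N #> b = N #> b'"
  shows "N #> (a \<otimes> b \<otimes> inv a \<otimes> inv b) = N #> (a' \<otimes> b' \<otimes> inv a' \<otimes> inv b')"
proof -
  interpret normal N G by fact
  show ?thesis using c e by (simp add: rcos_sum[symmetric] rcos_inv[symmetric])
qed

lemma key:
  fixes G (structure)
  assumes G: "group G" and U: "subgroup U (G \<times>\<times> G)" and V: "subgroup V (G \<times>\<times> G)"
    and DU: "diag G \<subseteq> U" and DV: "diag G \<subseteq> V"
  shows "k1 G (comm G (star U V)) \<subseteq> k1 G U <#> k1 G (comm G V)"
proof -
  interpret group G by fact
  interpret GG: group "G \<times>\<times> G" using DirProd_group[OF G G] .
  define N where "N = k1 G U"
  have NN: "N \<lhd> G" unfolding N_def by (rule k1_normal[OF G U DU])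
  interpret N: normal N G by (rule NN)
  define Dv where "Dv = comm G V"
  have Dvs: "subgroup Dv (G \<times>\<times> G)" unfolding Dv_def comm_def
    by (rule GG.derived_is_subgroup[OF subgroup.subset[OF V]])
  define S where "S = {(a, d). a \<in> carrier G \<and> (\<exists>c. (c, d) \<in> Dv \<and> N #> a = N #> c)}"
  have SS: "subgroup S (G \<times>\<times> G)"
  proof (rule GG.subgroupI)
    show "S \<subseteq> carrier (G \<times>\<times> G)" using subgroup.subset[OF Dvs] by (auto simp: S_def)
    have "(\<one>, \<one>) \<in> Dv" using subgroup.one_closed[OF Dvs] by simp
    hence "(\<one>, \<one>) \<in> S" by (auto simp: S_def)
    thus "S \<noteq> {}" by auto
  next
    fix p assume "p \<in> S"
    then obtain a d c where p: "p = (a, d)" and a: "a \<in> carrier G" and cd: "(c, d) \<in> Dv"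
      and e: "N #> a = N #> c" by (auto simp: S_def)
    have cdc: "c \<in> carrier G" "d \<in> carrier G" using cd subgroup.subset[OF Dvs] by auto
    have "inv\<^bsub>G \<times>\<times> G\<^esub> (c, d) \<in> Dv" using subgroup.m_inv_closed[OF Dvs cd] .
    hence "(inv c, inv d) \<in> Dv" using cdc by (simp add: G)
    moreover have "N #> inv a = N #> inv c" using e a cdc by (simp add: N.rcos_inv[symmetric])
    ultimately show "inv\<^bsub>G \<times>\<times> G\<^esub> p \<in> S" using p a cdc by (auto simp: S_def G)
  next
    fix p q assume "p \<in> S" "q \<in> S"
    then obtain a d c a2 d2 c2 where p: "p = (a, d)" and a: "a \<in> carrier G" and cd: "(c, d) \<in> Dv"
      and e: "N #> a = N #> c" and q: "q = (a2, d2)" and a2: "a2 \<in> carrier G" and cd2: "(c2, d2) \<in> Dv"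
      and e2: "N #> a2 = N #> c2" by (auto simp: S_def)
    have cdc: "c \<in> carrier G" "d \<in> carrier G" "c2 \<in> carrier G" "d2 \<in> carrier G"
      using cd cd2 subgroup.subset[OF Dvs] by auto
    have "(c, d) \<otimes>\<^bsub>G \<times>\<times> G\<^esub> (c2, d2) \<in> Dv" using subgroup.m_closed[OF Dvs cd cd2] .
    hence "(c \<otimes> c2, d \<otimes> d2) \<in> Dv" by simp
    moreover have "N #> (a \<otimes> a2) = N #> (c \<otimes> c2)" using e e2 a a2 cdc by (simp add: N.rcos_sum[symmetric])
    ultimately show "p \<otimes>\<^bsub>G \<times>\<times> G\<^esub> q \<in> S" using p q a a2 by (auto simp: S_def)
  qed
  have DS: "derived_set (G \<times>\<times> G) (star U V) \<subseteq> S"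
  proof
    fix z assume "z \<in> derived_set (G \<times>\<times> G) (star U V)"
    then obtain h1 h2 where h1: "h1 \<in> star U V" and h2: "h2 \<in> star U V"
      and z: "z = h1 \<otimes>\<^bsub>G \<times>\<times> G\<^esub> h2 \<otimes>\<^bsub>G \<times>\<times> G\<^esub> inv\<^bsub>G \<times>\<times> G\<^esub> h1 \<otimes>\<^bsub>G \<times>\<times> G\<^esub> inv\<^bsub>G \<times>\<times> G\<^esub> h2"
      by blast
    obtain u1 v1 x1 where hh1: "h1 = (u1, v1)" "(u1, x1) \<in> U" "(x1, v1) \<in> V"
      using h1 by (auto simp: star_def)
    obtain u2 v2 x2 where hh2: "h2 = (u2, v2)" "(u2, x2) \<in> U" "(x2, v2) \<in> V"
      using h2 by (auto simp: star_def)
    have cc: "u1 \<in> carrier G" "x1 \<in> carrier G" "v1 \<in> carrier G"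
             "u2 \<in> carrier G" "x2 \<in> carrier G" "v2 \<in> carrier G"
      using hh1 hh2 subgroup.subset[OF U] subgroup.subset[OF V] by auto
    have zz: "z = (u1 \<otimes> u2 \<otimes> inv u1 \<otimes> inv u2, v1 \<otimes> v2 \<otimes> inv v1 \<otimes> inv v2)"
      using z hh1 hh2 cc by (simp add: G)
    have "(x1, v1) \<otimes>\<^bsub>G \<times>\<times> G\<^esub> (x2, v2) \<otimes>\<^bsub>G \<times>\<times> G\<^esub> inv\<^bsub>G \<times>\<times> G\<^esub> (x1, v1) \<otimes>\<^bsub>G \<times>\<times> G\<^esub> inv\<^bsub>G \<times>\<times> G\<^esub> (x2, v2)
          \<in> derived_set (G \<times>\<times> G) V" using hh1 hh2 by blast
    hence "(x1, v1) \<otimes>\<^bsub>G \<times>\<times> G\<^esub> (x2, v2) \<otimes>\<^bsub>G \<times>\<times> G\<^esub> inv\<^bsub>G \<times>\<times> G\<^esub> (x1, v1) \<otimes>\<^bsub>G \<times>\<times> G\<^esub> inv\<^bsub>G \<times>\<times> G\<^esub> (x2, v2)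
          \<in> Dv" unfolding Dv_def comm_def derived_def by (rule generate.incl)
    hence dv: "(x1 \<otimes> x2 \<otimes> inv x1 \<otimes> inv x2, v1 \<otimes> v2 \<otimes> inv v1 \<otimes> inv v2) \<in> Dv"
      using cc by (simp add: G)
    have "N #> (u1 \<otimes> u2 \<otimes> inv u1 \<otimes> inv u2) = N #> (x1 \<otimes> x2 \<otimes> inv x1 \<otimes> inv x2)"
      using comm_rcos[OF NN cc(1,4,2,5)] memU_coset[OF G U DU] hh1 hh2 unfolding N_def by blast
    thus "z \<in> S" using zz dv cc by (auto simp: S_def)
  qed
  have CS: "comm G (star U V) \<subseteq> S" unfolding comm_def derived_def
    by (rule GG.generate_subgroup_incl[OF DS SS])
  show ?thesis
  proof
    fix x assume "x \<in> k1 G (comm G (star U V))"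
    hence "(x, \<one>) \<in> S" using CS by (auto simp: k1_def)
    then obtain c where x: "x \<in> carrier G" and c: "(c, \<one>) \<in> Dv" and e: "N #> x = N #> c"
      by (auto simp: S_def)
    have "x \<in> N #> c" using rcos_self[OF x N.subgroup_axioms] e by simp
    then obtain n where n: "n \<in> N" "x = n \<otimes> c" by (auto simp: r_coset_def)
    have "c \<in> k1 G (comm G V)" using c by (simp add: k1_def Dv_def)
    thus "x \<in> k1 G U <#> k1 G (comm G V)" using n unfolding N_def set_mult_def by blast
  qed
qed



lemma part1:
  fixes G (structure)
  assumes G: "group G" and U: "subgroup U (G \<times>\<times> G)" and V: "subgroup V (G \<times>\<times> G)"
    and DU: "diag G \<subseteq> U" and DV: "diag G \<subseteq> V"
  shows "(G\<lparr>carrier := k1 G (comm G (star U V))\<rparr>) Mod (k1 G U \<inter> k1 G (comm G (star U V)))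
           \<cong> (G\<lparr>carrier := k1 G (comm G V)\<rparr>) Mod (k2 G U \<inter> k1 G (comm G V))"
proof -
  interpret group G by fact
  interpret GG: group "G \<times>\<times> G" using DirProd_group[OF G G] .
  define N where "N = k1 G U"
  define A where "A = k1 G (comm G (star U V))"
  define B where "B = k1 G (comm G V)"
  have NN: "N \<lhd> G" unfolding N_def by (rule k1_normal[OF G U DU])
  have Uc: "U \<subseteq> carrier (G \<times>\<times> G)" "V \<subseteq> carrier (G \<times>\<times> G)"
    using subgroup.subset[OF U] subgroup.subset[OF V] by auto
  have SA: "subgroup A G" unfolding A_def comm_def
    by (rule k1_subgroup[OF G GG.derived_is_subgroup[OF star_carrier[OF Uc]]])
  have SB: "subgroup B G" unfolding B_def comm_def
    by (rule k1_subgroup[OF G GG.derived_is_subgroup[OF Uc(2)]])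
  interpret sA: second_isomorphism_grp N G A
    by (intro second_isomorphism_grp.intro NN second_isomorphism_grp_axioms.intro SA)
  interpret sB: second_isomorphism_grp N G B
    by (intro second_isomorphism_grp.intro NN second_isomorphism_grp_axioms.intro SB)
  have isoA: "G\<lparr>carrier := A\<rparr> Mod (N \<inter> A) \<cong> G\<lparr>carrier := N <#> A\<rparr> Mod N"
    using sA.normal_intersection_quotient_isom unfolding is_iso_def by auto
  have isoB: "G\<lparr>carrier := B\<rparr> Mod (N \<inter> B) \<cong> G\<lparr>carrier := N <#> B\<rparr> Mod N"
    using sB.normal_intersection_quotient_isom unfolding is_iso_def by auto
  have BA: "B \<subseteq> A" unfolding A_def B_def comm_def k1_def
    using GG.mono_derived[OF V_sub_star[OF DU Uc(2)]] by auto
  have AB: "A \<subseteq> N <#> B" unfolding A_def N_def B_def by (rule key[OF G U V DU DV])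
  have Nc: "N \<subseteq> carrier G" using NN normal_imp_subgroup subgroup.subset by blast
  have Bc: "B \<subseteq> carrier G" using SB subgroup.subset by blast
  have eq: "N <#> A = N <#> B"
  proof
    show "N <#> B \<subseteq> N <#> A" using BA unfolding set_mult_def by blast
    show "N <#> A \<subseteq> N <#> B"
    proof
      fix x assume "x \<in> N <#> A"
      then obtain n a where n: "n \<in> N" and a: "a \<in> A" and x: "x = n \<otimes> a"
        unfolding set_mult_def by blast
      obtain n' b where n': "n' \<in> N" and b: "b \<in> B" and a': "a = n' \<otimes> b"
        using AB a unfolding set_mult_def by blast
      have "x = (n \<otimes> n') \<otimes> b" using x a' n n' b Nc Bc by (simp add: m_assoc subset_iff)
      moreover have "n \<otimes> n' \<in> N" using n n' NN normal_imp_subgroup subgroup.m_closed by blast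
      ultimately show "x \<in> N <#> B" using b unfolding set_mult_def by blast
    qed
  qed
  have grpB: "group (G\<lparr>carrier := B\<rparr> Mod (N \<inter> B))"
    using normal.factorgroup_is_group[OF sB.normal_subgrp_intersection_normal] by (simp add: Int_commute)
  have k2U: "k2 G U = N" unfolding N_def by (rule k2_eq_k1[OF G U DU])
  have "G\<lparr>carrier := A\<rparr> Mod (N \<inter> A) \<cong> G\<lparr>carrier := B\<rparr> Mod (N \<inter> B)"
    using iso_trans[OF isoA[unfolded eq] group.iso_sym[OF grpB isoB]] .
  thus ?thesis unfolding A_def B_def N_def k2U[unfolded N_def] .
qed



definition sw :: "('a \<times> 'a) set \<Rightarrow> ('a \<times> 'a) set" where
  "sw W = (\<lambda>(x, y). (y, x)) ` W"

lemma mem_sw [simp]: "(a, b) \<in> sw W \<longleftrightarrow> (b, a) \<in> W"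
proof
  assume "(a, b) \<in> sw W"
  then obtain z where "z \<in> W" "(a, b) = (\<lambda>(x, y). (y, x)) z" unfolding sw_def by blast
  thus "(b, a) \<in> W" by (cases z) auto
next
  assume "(b, a) \<in> W"
  thus "(a, b) \<in> sw W" unfolding sw_def by (rule rev_image_eqI) simp
qed

lemma sw_hom:
  fixes G (structure)
  assumes G: "group G"
  shows "group_hom (G \<times>\<times> G) (G \<times>\<times> G) (\<lambda>(x, y). (y, x))"
proof -
  have GG: "group (G \<times>\<times> G)" using DirProd_group[OF G G] .
  show ?thesis
    by (intro group_hom.intro GG group_hom_axioms.intro homI) auto
qed

lemma sw_subgroup:
  fixes G (structure)
  assumes G: "group G" and U: "subgroup U (G \<times>\<times> G)"
  shows "subgroup (sw U) (G \<times>\<times> G)"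
  unfolding sw_def using group_hom.subgroup_img_is_subgroup[OF sw_hom[OF G] U] .

lemma sw_diag: "diag G \<subseteq> U \<Longrightarrow> diag G \<subseteq> sw U"
  unfolding diag_def by auto

lemma k1_sw: "k1 G (sw W) = k2 G W"
  unfolding k1_def k2_def by auto

lemma k2_sw: "k2 G (sw W) = k1 G W"
  unfolding k1_def k2_def by auto

lemma star_sw: "star (sw V) (sw U) = sw (star U V)"
  unfolding set_eq_iff proof
  fix z show "z \<in> star (sw V) (sw U) \<longleftrightarrow> z \<in> sw (star U V)"
    by (cases z) (auto simp: star_def p1_def p2_def)
qed

lemma comm_sw:
  fixes G (structure)
  assumes G: "group G" and W: "W \<subseteq> carrier (G \<times>\<times> G)"
  shows "comm G (sw W) = sw (comm G W)"
  unfolding sw_def comm_def using group_hom.derived_img[OF sw_hom[OF G] W] .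

lemma part2:
  fixes G (structure)
  assumes G: "group G" and U: "subgroup U (G \<times>\<times> G)" and V: "subgroup V (G \<times>\<times> G)"
    and DU: "diag G \<subseteq> U" and DV: "diag G \<subseteq> V"
  shows "(G\<lparr>carrier := k2 G (comm G (star U V))\<rparr>) Mod (k2 G V \<inter> k2 G (comm G (star U V)))
           \<cong> (G\<lparr>carrier := k2 G (comm G U)\<rparr>) Mod (k1 G V \<inter> k2 G (comm G U))"
proof -
  have Uc: "U \<subseteq> carrier (G \<times>\<times> G)" "V \<subseteq> carrier (G \<times>\<times> G)"
    using subgroup.subset[OF U] subgroup.subset[OF V] by auto
  have P: "(G\<lparr>carrier := k1 G (comm G (star (sw V) (sw U)))\<rparr>) Mod (k1 G (sw V) \<inter> k1 G (comm G (star (sw V) (sw U))))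
           \<cong> (G\<lparr>carrier := k1 G (comm G (sw U))\<rparr>) Mod (k2 G (sw V) \<inter> k1 G (comm G (sw U)))"
    by (rule part1[OF G sw_subgroup[OF G V] sw_subgroup[OF G U] sw_diag[OF DV] sw_diag[OF DU]])
  show ?thesis using P
    by (simp add: star_sw comm_sw[OF G star_carrier[OF Uc]] comm_sw[OF G Uc(1)] k1_sw k2_sw)
qed


theorem lemma5p5:
  fixes G :: "('a, 'b) monoid_scheme"
  assumes "group G" and "finite (carrier G)"
    and "subgroup U (G \<times>\<times> G)" and "subgroup V (G \<times>\<times> G)"
    and "diag G \<subseteq> U" and "diag G \<subseteq> V"
  shows "((G\<lparr>carrier := k1 G (comm G (star U V))\<rparr>) Mod (k1 G U \<inter> k1 G (comm G (star U V)))
           \<cong> (G\<lparr>carrier := k1 G (comm G V)\<rparr>) Mod (k2 G U \<inter> k1 G (comm G V))) \<and>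
         ((G\<lparr>carrier := k2 G (comm G (star U V))\<rparr>) Mod (k2 G V \<inter> k2 G (comm G (star U V)))
           \<cong> (G\<lparr>carrier := k2 G (comm G U)\<rparr>) Mod (k1 G V \<inter> k2 G (comm G U)))"
  using part1[OF assms(1,3,4,5,6)] part2[OF assms(1,3,4,5,6)] by blast

end
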